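(* Let $l,u\in\mathbb{R}^n$ with $l\le u$ and let $H:\prod_{i=1}^n[l_i,u_i]\to\mathbb{R}$ be continuous submodular. Let $R(x)=\sum_{i=1}^n R_i(x_i)$ be separable with each $R_i$ strictly increasing. Let $A=(A_1,\dots,A_n)$ be an interpolation mapping with $A_i:[k_i]\to[l_i,u_i]$, and define $H^\delta(x)=H(A(x))$, $R^\delta_i(x_i)=R_i(A_i(x_i))$, $R^\delta(x)=\sum_i R^\delta_i(x_i)$ on $\prod_{i=1}^n[k_i]$. For $1\le j\le k_i-1$ let $a_{ij}(t)=\tfrac12 t^2\,[R_i^\delta(j)-R_i^\delta(j-1)]$. Then the problem \[ \min_{\rho\in\prod_{i=1}^n\mathbb{R}_\downarrow^{k_i-1}}\; h_\downarrow(\rho)+\sum_{i=1}^n\sum_{j=1}^{k_i-1} a_{ij}(\rho_i(j)) \] is a convex optimization problem, and from its minimizer $\rho^*$ one recovers, for every $\lambda\in\mathbb{R}$, a minimizer $x(\lambda)$ of \[ \min_{x\in\prod_{i=1}^n[k_i]}\; H^\delta(x)+\lambda R^\delta(x), \] namely $x(\lambda)_i=\max\{j: 1\le j\le k_i-1,\ \rho^*_i(j)\ge\lambda\}$, and $x(\lambda)_i=0$ if $\rho^*_i(j)<\lambda$ for all $j$.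
   Context: $[k]=\{0,1,\dots,k-1\}$. A function $g$ on a lattice (subset of $\mathbb{R}^n$ closed under coordinatewise max $\vee$ and min $\wedge$) is submodular if $g(x)+g(y)\ge g(x\vee y)+g(x\wedge y)$; "continuous submodular" means this holds on the box. The interpolation maps $A_i$ are increasing with $A_i(0)=l_i$, $A_i(k_i-1)=u_i$ (so $H^\delta$ is lattice submodular on $\prod_i[k_i]$). $\mathbb{R}_\downarrow^{m}$ is the set of $z\in\mathbb{R}^m$ with $z_1\ge z_2\ge\dots\ge z_m$; for $\rho=(\rho_1,\dots,\rho_n)\in\prod_i\mathbb{R}_\downarrow^{k_i-1}$, $\rho_i(j)$ denotes the $j$-th coordinate of $\rho_i$, $j=1,\dots,k_i-1$. The extension $h_\downarrow$ of $H^\delta$ is defined as follows: list all pairs $(i,j)$, $1\le j\le k_i-1$, as $(i_1,j_1),\dots,(i_N,j_N)$ with $N=\sum_i(k_i-1)$ so that $\rho_{i_1}(j_1)\ge\rho_{i_2}(j_2)\ge\dots\ge\rho_{i_N}(j_N)$ and, for each $i$, the pairs $(i,1),(i,2),\dots$ appear in this order; set $x^0=0$ and $x^m=x^{m-1}+e_{i_m}$; then $h_\downarrow(\rho)=H^\delta(0)+\sum_{m=1}^N\rho_{i_m}(j_m)\,[H^\delta(x^m)-H^\delta(x^{m-1})]$. This $h_\downarrow$ is convex and agrees with $H^\delta$ on points $\rho$ with entries in $\{0,1\}$ (identifying $x$ with $\rho_i(j)=1$ iff $j\le x_i$). *)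

theory Defs
  imports "HOL-Analysis.Analysis"
begin

text \<open>Coordinates are indexed by a finite type 'n (the index set {1..n}).
  Discrete points x in prod_i [k_i] are functions 'n => nat with x i < k i.
  A point rho in prod_i R_down^(k_i - 1) is a function 'n => nat => real, where
  only the entries rho i j with 1 <= j <= k i - 1 are meaningful.\<close>

definition grid :: "('n \<Rightarrow> nat) \<Rightarrow> ('n \<Rightarrow> nat) set" where
  "grid k = {x. \<forall>i. x i < k i}"

definition dec_set :: "('n \<Rightarrow> nat) \<Rightarrow> ('n \<Rightarrow> nat \<Rightarrow> real) set" where
  "dec_set k = {\<rho>. \<forall>i j. 1 \<le> j \<and> j + 1 \<le> k i - 1 \<longrightarrow> \<rho> i j \<ge> \<rho> i (j + 1)}"

definition submodular_on :: "('a::lattice) set \<Rightarrow> ('a \<Rightarrow> real) \<Rightarrow> bool" where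
  "submodular_on S g \<longleftrightarrow>
     (\<forall>x\<in>S. \<forall>y\<in>S. g x + g y \<ge> g (sup x y) + g (inf x y))"

definition comb :: "real \<Rightarrow> ('n \<Rightarrow> nat \<Rightarrow> real) \<Rightarrow> ('n \<Rightarrow> nat \<Rightarrow> real) \<Rightarrow> ('n \<Rightarrow> nat \<Rightarrow> real)" where
  "comb t \<rho> \<sigma> = (\<lambda>i j. t * \<rho> i j + (1 - t) * \<sigma> i j)"

definition fconvex :: "('n \<Rightarrow> nat \<Rightarrow> real) set \<Rightarrow> bool" where
  "fconvex D \<longleftrightarrow> (\<forall>\<rho>\<in>D. \<forall>\<sigma>\<in>D. \<forall>t::real. 0 \<le> t \<and> t \<le> 1 \<longrightarrow> comb t \<rho> \<sigma> \<in> D)"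

definition fconvex_on :: "('n \<Rightarrow> nat \<Rightarrow> real) set \<Rightarrow> (('n \<Rightarrow> nat \<Rightarrow> real) \<Rightarrow> real) \<Rightarrow> bool" where
  "fconvex_on D f \<longleftrightarrow> (\<forall>\<rho>\<in>D. \<forall>\<sigma>\<in>D. \<forall>t::real. 0 \<le> t \<and> t \<le> 1 \<longrightarrow>
      f (comb t \<rho> \<sigma>) \<le> t * f \<rho> + (1 - t) * f \<sigma>)"

definition valid_order :: "('n \<Rightarrow> nat) \<Rightarrow> ('n \<Rightarrow> nat \<Rightarrow> real) \<Rightarrow> ('n \<times> nat) list \<Rightarrow> bool" where
  "valid_order k \<rho> L \<longleftrightarrow>
     distinct L \<and> set L = {(i, j). 1 \<le> j \<and> j \<le> k i - 1} \<and>
     (\<forall>a b. a < b \<and> b < length L \<longrightarrow>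
        \<rho> (fst (L ! a)) (snd (L ! a)) \<ge> \<rho> (fst (L ! b)) (snd (L ! b))) \<and>
     (\<forall>a b. a < length L \<and> b < length L \<and> fst (L ! a) = fst (L ! b) \<and>
        snd (L ! a) < snd (L ! b) \<longrightarrow> a < b)"

text \<open>x^m: x^0 = 0, x^m = x^(m-1) + e_(i_m).\<close>
definition chain_pt :: "('n \<times> nat) list \<Rightarrow> nat \<Rightarrow> ('n \<Rightarrow> nat)" where
  "chain_pt L m = (\<lambda>i. length (filter (\<lambda>p. fst p = i) (take m L)))"

definition hdown :: "(('n \<Rightarrow> nat) \<Rightarrow> real) \<Rightarrow> ('n \<Rightarrow> nat) \<Rightarrow> ('n \<Rightarrow> nat \<Rightarrow> real) \<Rightarrow> real" where
  "hdown Hd k \<rho> =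
     (let L = (SOME L. valid_order k \<rho> L) in
       Hd (\<lambda>_. 0) + (\<Sum>m<length L. \<rho> (fst (L ! m)) (snd (L ! m)) *
          (Hd (chain_pt L (Suc m)) - Hd (chain_pt L m))))"

end

theory Submission
  imports Defs "HOL-Library.List_Lexorder"
begin

fun Gr :: "(('n \<Rightarrow> nat) \<Rightarrow> real) \<Rightarrow> ('n \<Rightarrow> nat \<Rightarrow> real) \<Rightarrow> ('n \<Rightarrow> nat) \<Rightarrow> 'n list \<Rightarrow> real" where
  "Gr Hd \<sigma> b [] = 0"
| "Gr Hd \<sigma> b (i # w) = \<sigma> i (Suc (b i)) * (Hd (b(i := Suc (b i))) - Hd b) + Gr Hd \<sigma> (b(i := Suc (b i))) w"

fun vals :: "('n \<Rightarrow> nat \<Rightarrow> real) \<Rightarrow> ('n \<Rightarrow> nat) \<Rightarrow> 'n list \<Rightarrow> real list" where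
  "vals \<sigma> b [] = []"
| "vals \<sigma> b (i # w) = \<sigma> i (Suc (b i)) # vals \<sigma> (b(i := Suc (b i))) w"

definition ind :: "('n \<Rightarrow> nat) \<Rightarrow> 'n \<Rightarrow> nat \<Rightarrow> real" where
  "ind t i j = (if j \<le> t i then 1 else 0)"

definition SMg :: "(('n \<Rightarrow> nat) \<Rightarrow> real) \<Rightarrow> ('n \<Rightarrow> nat) \<Rightarrow> bool" where
  "SMg Hd k \<longleftrightarrow> (\<forall>X\<in>grid k. \<forall>Y\<in>grid k.
     Hd (\<lambda>i. max (X i) (Y i)) + Hd (\<lambda>i. min (X i) (Y i)) \<le> Hd X + Hd Y)"

lemma Gr_lin: "Gr Hd (\<lambda>i j. a * \<sigma>1 i j + c * \<sigma>2 i j) b w = a * Gr Hd \<sigma>1 b w + c * Gr Hd \<sigma>2 b w"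
  by (induction w arbitrary: b) (simp_all add: algebra_simps)

lemma vals_mem: "q \<in> set w \<Longrightarrow> \<sigma> q (Suc (b q)) \<in> set (vals \<sigma> b w)"
proof (induction w arbitrary: b)
  case (Cons r w)
  show ?case
  proof (cases "r = q")
    case False
    then have qw: "q \<in> set w" using Cons.prems by simp
    have "\<sigma> q (Suc ((b(r := Suc (b r))) q)) \<in> set (vals \<sigma> (b(r := Suc (b r))) w)"
      by (rule Cons.IH[OF qw])
    with False show ?thesis by simp
  qed simp
qed simp

lemma length_vals[simp]: "length (vals \<sigma> b w) = length w"
  by (induction w arbitrary: b) simp_all

lemma vals_nth: "m < length w \<Longrightarrow>
  vals \<sigma> b w ! m = \<sigma> (w!m) (b (w!m) + count (mset (take (Suc m) w)) (w!m))"
proof (induction w arbitrary: b m)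
  case (Cons i w)
  show ?case
  proof (cases m)
    case (Suc m')
    then have mw: "m' < length w" using Cons.prems by simp
    have "vals \<sigma> (b(i := Suc (b i))) w ! m' = \<sigma> (w!m') ((b(i := Suc (b i))) (w!m') + count (mset (take (Suc m') w)) (w!m'))"
      by (rule Cons.IH[OF mw])
    with Suc show ?thesis
      by (auto simp: count_mset)
  qed simp
qed simp

lemma dec_mono:
  assumes "\<sigma> \<in> dec_set k" "1 \<le> j" "j \<le> j'" "j' \<le> k i - 1"
  shows "\<sigma> i j' \<le> \<sigma> i j"
  using assms(3,4)
proof (induction j' rule: dec_induct)
  case (step n)
  then have "\<sigma> i (n+1) \<le> \<sigma> i n" using assms(1,2) by (auto simp: dec_set_def)
  with step show ?case by simp
qed simp

lemma grid_upd:
  assumes "\<forall>q. b q + count (mset w) q = k q - 1" "i \<in> set w" and kp: "\<forall>q. 1 \<le> k q"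
  shows "b(i := Suc (b i)) \<in> grid k" "b \<in> grid k"
proof -
  have c: "count (mset w) i > 0" using assms(2) by simp
  have bq: "\<And>q. b q < k q"
  proof -
    fix q
    have "b q + count (mset w) q = k q - 1" "1 \<le> k q" using assms(1) kp by auto
    then show "b q < k q" by arith
  qed
  have "Suc (b i) < k i"
  proof -
    have "b i + count (mset w) i = k i - 1" "1 \<le> k i" using assms(1) kp by auto
    then show ?thesis using c by arith
  qed
  then show "b(i := Suc (b i)) \<in> grid k" "b \<in> grid k" using bq by (auto simp: grid_def)
qed

lemma Gr_bubble:
  assumes SM: "SMg Hd k" and dec: "\<sigma> \<in> dec_set k" and kp: "\<forall>q. 1 \<le> k q"
  shows "i \<notin> set w1 \<Longrightarrow> (\<forall>q\<in>set w1. \<sigma> q (Suc (b q)) \<le> \<sigma> i (Suc (b i))) \<Longrightarrow>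
    (\<forall>q. b q + count (mset (w1 @ i # w2)) q = k q - 1) \<Longrightarrow>
    Gr Hd \<sigma> b (w1 @ i # w2) \<le> Gr Hd \<sigma> b (i # w1 @ w2)"
proof (induction w1 arbitrary: b)
  case Nil
  then show ?case by simp
next
  case (Cons q w1)
  have qi: "q \<noteq> i" using Cons.prems(1) by auto
  define bq where "bq = b(q := Suc (b q))"
  define bi where "bi = b(i := Suc (b i))"
  define bqi where "bqi = bq(i := Suc (bq i))"
  have bqi2: "bi(q := Suc (bi q)) = bqi" using qi unfolding bq_def bi_def bqi_def by (auto simp: fun_eq_iff)
  have bqi_i: "bq i = b i" "bi q = b q" using qi by (auto simp: bq_def bi_def)
  have cnt: "\<forall>q'. bq q' + count (mset (w1 @ i # w2)) q' = k q' - 1"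
  proof
    fix q'
    show "bq q' + count (mset (w1 @ i # w2)) q' = k q' - 1"
      using Cons.prems(3)[rule_format, of q'] by (auto simp: bq_def)
  qed
  have le1: "\<forall>q'\<in>set w1. \<sigma> q' (Suc (bq q')) \<le> \<sigma> i (Suc (bq i))"
  proof
    fix q' assume q': "q' \<in> set w1"
    show "\<sigma> q' (Suc (bq q')) \<le> \<sigma> i (Suc (bq i))"
    proof (cases "q' = q")
      case True
      have cpos: "count (mset w1) q > 0" using q' True by simp
      have c: "count (mset (q # w1 @ i # w2)) q = Suc (count (mset w1) q + count (mset (i # w2)) q)" by simp
      have "count (mset (q # w1 @ i # w2)) q \<ge> 2" using c cpos by linarith
      then have "Suc (Suc (b q)) \<le> k q - 1" using Cons.prems(3)[rule_format, of q] by simp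
      then have "\<sigma> q (Suc (Suc (b q))) \<le> \<sigma> q (Suc (b q))"
        using dec_mono[OF dec, of "Suc (b q)" "Suc (Suc (b q))" q] by simp
      then show ?thesis using True Cons.prems(2) bqi_i by (simp add: bq_def)
    next
      case False
      then show ?thesis using Cons.prems(2) q' bqi_i by (simp add: bq_def)
    qed
  qed
  have IH: "Gr Hd \<sigma> bq (w1 @ i # w2) \<le> Gr Hd \<sigma> bq (i # w1 @ w2)"
    using Cons.IH[OF _ le1 cnt] Cons.prems(1) by simp
  have g1: "bi \<in> grid k" "bq \<in> grid k"
    using grid_upd(1)[OF Cons.prems(3) _ kp, where i=i] grid_upd(1)[OF Cons.prems(3) _ kp, where i=q]
    by (auto simp: bi_def bq_def)
  have mx: "(\<lambda>x. max (bi x) (bq x)) = bqi" "(\<lambda>x. min (bi x) (bq x)) = b"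
    using qi by (auto simp: bi_def bq_def bqi_def fun_eq_iff)
  have sm: "Hd bqi + Hd b \<le> Hd bi + Hd bq"
  proof -
    have "Hd (\<lambda>x. max (bi x) (bq x)) + Hd (\<lambda>x. min (bi x) (bq x)) \<le> Hd bi + Hd bq"
      using SM[unfolded SMg_def, rule_format, OF g1(1) g1(2)] .
    then show ?thesis by (simp only: mx)
  qed
  have s: "\<sigma> q (Suc (b q)) \<le> \<sigma> i (Suc (b i))" using Cons.prems(2) by simp
  have alg: "\<sigma> q (Suc (b q)) * (Hd bq - Hd b) + \<sigma> i (Suc (b i)) * (Hd bqi - Hd bq)
     \<le> \<sigma> i (Suc (b i)) * (Hd bi - Hd b) + \<sigma> q (Suc (b q)) * (Hd bqi - Hd bi)"
  proof -
    have "0 \<le> (\<sigma> i (Suc (b i)) - \<sigma> q (Suc (b q))) * (Hd bi + Hd bq - Hd b - Hd bqi)"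
      using s sm by (intro mult_nonneg_nonneg) auto
    then show ?thesis by (simp add: algebra_simps)
  qed
  have "Gr Hd \<sigma> b ((q # w1) @ i # w2) = \<sigma> q (Suc (b q)) * (Hd bq - Hd b) + Gr Hd \<sigma> bq (w1 @ i # w2)"
    by (simp add: bq_def)
  also have "\<dots> \<le> \<sigma> q (Suc (b q)) * (Hd bq - Hd b) + Gr Hd \<sigma> bq (i # w1 @ w2)"
    using IH by simp
  also have "\<dots> = \<sigma> q (Suc (b q)) * (Hd bq - Hd b) + \<sigma> i (Suc (b i)) * (Hd bqi - Hd bq) + Gr Hd \<sigma> bqi (w1 @ w2)"
    by (simp add: bqi_def bqi_i)
  also have "\<dots> \<le> \<sigma> i (Suc (b i)) * (Hd bi - Hd b) + \<sigma> q (Suc (b q)) * (Hd bqi - Hd bi) + Gr Hd \<sigma> bqi (w1 @ w2)"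
    using alg by simp
  also have "\<dots> = Gr Hd \<sigma> b (i # (q # w1) @ w2)"
    using qi by (simp add: bqi2[symmetric] bi_def bqi_i[unfolded bi_def])
  finally show ?case .
qed

lemma Gr_greedy:
  assumes SM: "SMg Hd k" and dec: "\<sigma> \<in> dec_set k" and kp: "\<forall>q. 1 \<le> k q"
  shows "\<forall>b w. mset w = mset ws \<longrightarrow> sorted_wrt (\<ge>) (vals \<sigma> b ws) \<longrightarrow>
     (\<forall>q. b q + count (mset ws) q = k q - 1) \<longrightarrow> Gr Hd \<sigma> b w \<le> Gr Hd \<sigma> b ws"
proof (induction ws)
  case Nil
  then show ?case by simp
next
  case (Cons i ws)
  show ?case
  proof (intro allI impI)
    fix b w
    assume ms: "mset w = mset (i # ws)" and so: "sorted_wrt (\<ge>) (vals \<sigma> b (i # ws))"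
      and cn: "\<forall>q. b q + count (mset (i # ws)) q = k q - 1"
    have "i \<in># mset w" using ms by simp
    then have "i \<in> set w" by simp
    then obtain w1 w2 where w: "w = w1 @ i # w2" and iw1: "i \<notin> set w1"
      using split_list_first by metis
    define b' where "b' = b(i := Suc (b i))"
    have so1: "\<forall>y\<in>set (vals \<sigma> b' ws). y \<le> \<sigma> i (Suc (b i))"
      and so2: "sorted_wrt (\<ge>) (vals \<sigma> b' ws)" using so by (simp_all add: b'_def)
    have ms2: "mset (w1 @ w2) = mset ws" using ms w by simp
    have c1: "\<forall>q\<in>set w1. \<sigma> q (Suc (b q)) \<le> \<sigma> i (Suc (b i))"
    proof
      fix q assume q: "q \<in> set w1"
      then have qi: "q \<noteq> i" using iw1 by auto
      have "q \<in># mset (w1 @ w2)" using q by simp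
      then have "q \<in># mset ws" by (simp only: ms2)
      then have "q \<in> set ws" by simp
      then have "\<sigma> q (Suc (b' q)) \<in> set (vals \<sigma> b' ws)" by (rule vals_mem)
      with so1 qi show "\<sigma> q (Suc (b q)) \<le> \<sigma> i (Suc (b i))" by (auto simp: b'_def)
    qed
    have cn1: "\<forall>q. b q + count (mset (w1 @ i # w2)) q = k q - 1"
      using cn ms w by simp
    have cn2: "\<forall>q. b' q + count (mset ws) q = k q - 1"
    proof
      fix q
      show "b' q + count (mset ws) q = k q - 1"
        using cn[rule_format, of q] by (auto simp: b'_def)
    qed
    have IH2: "Gr Hd \<sigma> b' (w1 @ w2) \<le> Gr Hd \<sigma> b' ws"
      by (rule Cons.IH[rule_format, OF ms2 so2 cn2[rule_format]])
    have "Gr Hd \<sigma> b w \<le> Gr Hd \<sigma> b (i # w1 @ w2)"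
      unfolding w by (rule Gr_bubble[OF SM dec kp iw1 c1 cn1])
    also have "\<dots> = \<sigma> i (Suc (b i)) * (Hd b' - Hd b) + Gr Hd \<sigma> b' (w1 @ w2)"
      by (simp add: b'_def)
    also have "\<dots> \<le> \<sigma> i (Suc (b i)) * (Hd b' - Hd b) + Gr Hd \<sigma> b' ws"
      using IH2 by simp
    also have "\<dots> = Gr Hd \<sigma> b (i # ws)" by (simp add: b'_def)
    finally show "Gr Hd \<sigma> b w \<le> Gr Hd \<sigma> b (i # ws)" .
  qed
qed

lemma Gr_ind_zero: "\<forall>q. t q \<le> b q \<Longrightarrow> Gr Hd (ind t) b w = 0"
proof (induction w arbitrary: b)
  case (Cons i w)
  have "\<forall>q. t q \<le> (b(i := Suc (b i))) q" using Cons.prems by (simp add: le_SucI)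
  then have "Gr Hd (ind t) (b(i := Suc (b i))) w = 0" by (rule Cons.IH)
  moreover have "ind t i (Suc (b i)) = 0" using Cons.prems by (simp add: ind_def not_less_eq_eq)
  ultimately show ?case by (simp only: Gr.simps)
qed simp

lemma Gr_ind_upper:
  assumes SM: "SMg Hd k" and t: "t \<in> grid k" and kp: "\<forall>q. 1 \<le> k q"
  shows "\<forall>q. b q + count (mset w) q = k q - 1 \<Longrightarrow>
    Gr Hd (ind t) b w \<le> Hd (\<lambda>q. max (b q) (t q)) - Hd b"
proof (induction w arbitrary: b)
  case Nil
  have "\<forall>q. t q \<le> b q"
  proof
    fix q
    have "t q < k q" using t by (simp add: grid_def)
    moreover have "b q = k q - 1" using Nil[rule_format, of q] by simp
    ultimately show "t q \<le> b q" by arith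
  qed
  then have "(\<lambda>q. max (b q) (t q)) = b" by (simp add: fun_eq_iff max_absorb1)
  then show ?case by simp
next
  case (Cons i w)
  define b' where "b' = b(i := Suc (b i))"
  have cn: "\<forall>q. b' q + count (mset w) q = k q - 1"
  proof
    fix q
    show "b' q + count (mset w) q = k q - 1"
      using Cons.prems[rule_format, of q] by (auto simp: b'_def)
  qed
  have IH: "Gr Hd (ind t) b' w \<le> Hd (\<lambda>q. max (b' q) (t q)) - Hd b'" by (rule Cons.IH[OF cn])
  show ?case
  proof (cases "Suc (b i) \<le> t i")
    case True
    then have "(\<lambda>q. max (b' q) (t q)) = (\<lambda>q. max (b q) (t q))" by (auto simp: b'_def fun_eq_iff)
    moreover have "ind t i (Suc (b i)) = 1" using True by (simp add: ind_def)
    ultimately show ?thesis using IH by (simp add: b'_def[symmetric])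
  next
    case False
    have g: "b' \<in> grid k" "b \<in> grid k" using grid_upd[OF Cons.prems _ kp, where i=i] by (auto simp: b'_def)
    have gm: "(\<lambda>q. max (b q) (t q)) \<in> grid k" using g t by (auto simp: grid_def)
    have e1: "(\<lambda>x. max (max (b x) (t x)) (b' x)) = (\<lambda>q. max (b' q) (t q))"
      "(\<lambda>x. min (max (b x) (t x)) (b' x)) = b"
      using False by (auto simp: b'_def fun_eq_iff max_def min_def)
    have "Hd (\<lambda>q. max (b' q) (t q)) + Hd b \<le> Hd (\<lambda>q. max (b q) (t q)) + Hd b'"
    proof -
      have "Hd (\<lambda>x. max (max (b x) (t x)) (b' x)) + Hd (\<lambda>x. min (max (b x) (t x)) (b' x))
         \<le> Hd (\<lambda>q. max (b q) (t q)) + Hd b'"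
        using SM[unfolded SMg_def, rule_format, OF gm g(1)] .
      then show ?thesis by (simp only: e1)
    qed
    moreover have "ind t i (Suc (b i)) = 0" using False by (simp add: ind_def)
    ultimately show ?thesis using IH by (simp add: b'_def[symmetric])
  qed
qed

lemma Gr_ind_exact:
  assumes x: "x \<in> grid k"
    and thr: "\<forall>i j. 1 \<le> j \<and> j \<le> k i - 1 \<longrightarrow> (\<theta> \<le> \<sigma> i j \<longleftrightarrow> j \<le> x i)"
  shows "sorted_wrt (\<ge>) (vals \<sigma> b w) \<Longrightarrow> \<forall>q. b q + count (mset w) q = k q - 1 \<Longrightarrow>
    Gr Hd (ind x) b w = Hd (\<lambda>q. max (b q) (x q)) - Hd b"
proof (induction w arbitrary: b)
  case Nil
  have "\<forall>q. x q \<le> b q"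
  proof
    fix q
    have "x q < k q" using x by (simp add: grid_def)
    moreover have "b q = k q - 1" using Nil(2)[rule_format, of q] by simp
    ultimately show "x q \<le> b q" by arith
  qed
  then have "(\<lambda>q. max (b q) (x q)) = b" by (simp add: fun_eq_iff max_absorb1)
  then show ?case by simp
next
  case (Cons i w)
  define b' where "b' = b(i := Suc (b i))"
  have cn: "\<forall>q. b' q + count (mset w) q = k q - 1"
  proof
    fix q
    show "b' q + count (mset w) q = k q - 1"
      using Cons.prems(2)[rule_format, of q] by (auto simp: b'_def)
  qed
  have so1: "\<forall>y\<in>set (vals \<sigma> b' w). y \<le> \<sigma> i (Suc (b i))"
    and so2: "sorted_wrt (\<ge>) (vals \<sigma> b' w)" using Cons.prems(1) by (simp_all add: b'_def)
  show ?case
  proof (cases "Suc (b i) \<le> x i")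
    case True
    have IH: "Gr Hd (ind x) b' w = Hd (\<lambda>q. max (b' q) (x q)) - Hd b'" by (rule Cons.IH[OF so2 cn])
    have "(\<lambda>q. max (b' q) (x q)) = (\<lambda>q. max (b q) (x q))" using True by (auto simp: b'_def fun_eq_iff)
    moreover have "ind x i (Suc (b i)) = 1" using True by (simp add: ind_def)
    ultimately show ?thesis using IH by (simp add: b'_def[symmetric])
  next
    case False
    have ci: "Suc (b i) \<le> k i - 1" using Cons.prems(2)[rule_format, of i] by simp
    have vi: "\<sigma> i (Suc (b i)) < \<theta>" using thr[rule_format, of "Suc (b i)" i] ci False by auto
    have xb: "\<forall>q. x q \<le> b' q"
    proof
      fix q
      show "x q \<le> b' q"
      proof (cases "q \<in> set w")
        case True
        have "\<sigma> q (Suc (b' q)) \<in> set (vals \<sigma> b' w)" by (rule vals_mem[OF True])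
        then have "\<sigma> q (Suc (b' q)) \<le> \<sigma> i (Suc (b i))" using so1 by blast
        then have "\<sigma> q (Suc (b' q)) < \<theta>" using vi by linarith
        moreover have "Suc (b' q) \<le> k q - 1"
        proof -
          have "count (mset w) q > 0" using True by simp
          then show ?thesis using cn[rule_format, of q] by arith
        qed
        ultimately show ?thesis using thr[rule_format, of "Suc (b' q)" q] by auto
      next
        case False
        then have c0: "count (mset w) q = 0" by simp
        have "b' q = k q - 1" using cn[rule_format, of q] c0 by linarith
        moreover have "x q < k q" using x by (simp add: grid_def)
        ultimately show ?thesis by arith
      qed
    qed
    have xb2: "\<forall>q. x q \<le> b q"
    proof
      fix q
      show "x q \<le> b q"
      proof (cases "q = i")
        case True
        then show ?thesis using False by simp
      next
        case False
        then show ?thesis using xb[rule_format, of q] by (simp add: b'_def)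
      qed
    qed
    have "(\<lambda>q. max (b q) (x q)) = b" using xb2 by (simp add: fun_eq_iff max_absorb1)
    moreover have "ind x i (Suc (b i)) = 0" using False by (simp add: ind_def)
    ultimately show ?thesis using Gr_ind_zero[OF xb, of Hd w] by (simp add: b'_def[symmetric])
  qed
qed

lemma sum_Gr:
  "(\<Sum>m<length w. \<sigma> (w!m) (b (w!m) + count (mset (take (Suc m) w)) (w!m)) *
     (Hd (\<lambda>q. b q + count (mset (take (Suc m) w)) q) - Hd (\<lambda>q. b q + count (mset (take m w)) q)))
   = Gr Hd \<sigma> b w"
proof (induction w arbitrary: b)
  case Nil
  then show ?case by simp
next
  case (Cons i w)
  define b' where "b' = b(i := Suc (b i))"
  have e: "\<And>xs. (\<lambda>q. b q + count (mset (i # xs)) q) = (\<lambda>q. b' q + count (mset xs) q)"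
    by (auto simp: b'_def fun_eq_iff)
  have e0: "(\<lambda>q. b q + count (mset []) q) = b" "(\<lambda>q. b' q + count (mset []) q) = b'"
    by auto
  have e2: "\<And>xs r. b r + count (mset (i # xs)) r = b' r + count (mset xs) r"
    by (auto simp: b'_def)
  have "(\<Sum>m<length (i # w). \<sigma> ((i # w)!m) (b ((i # w)!m) + count (mset (take (Suc m) (i # w))) ((i # w)!m)) *
     (Hd (\<lambda>q. b q + count (mset (take (Suc m) (i # w))) q) - Hd (\<lambda>q. b q + count (mset (take m (i # w))) q)))
    = \<sigma> i (Suc (b i)) * (Hd b' - Hd b) +
      (\<Sum>m<length w. \<sigma> (w!m) (b' (w!m) + count (mset (take (Suc m) w)) (w!m)) *
     (Hd (\<lambda>q. b' q + count (mset (take (Suc m) w)) q) - Hd (\<lambda>q. b' q + count (mset (take m w)) q)))"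
    unfolding length_Cons sum.lessThan_Suc_shift
    apply (simp only: take_Suc_Cons nth_Cons_0 nth_Cons_Suc e take_0 e0 e2)
    apply (simp add: b'_def)
    done
  also have "\<dots> = Gr Hd \<sigma> b (i # w)" using Cons.IH[of b'] by (simp add: b'_def[symmetric])
  finally show ?case .
qed

lemma filt_cnt: "length (filter (\<lambda>p. fst p = i) xs) = count (mset (map fst xs)) i"
  by (induction xs) simp_all

lemma lex2: "([a, b] :: real list) \<le> [c, d] \<Longrightarrow> a \<le> c \<and> (a = c \<longrightarrow> b \<le> d)"
  unfolding list_le_def list_less_def by (simp add: less_le) (elim disjE conjE; simp)

lemma valid_chain:
  assumes V: "valid_order k \<sigma> L"
  shows "map snd (filter (\<lambda>p. fst p = i) L) = [1..<k i]"
proof -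
  let ?F = "filter (\<lambda>p. fst p = i) L"
  have dist: "distinct L" and setL: "set L = {(i, j). 1 \<le> j \<and> j \<le> k i - 1}"
    and ord: "\<forall>a b. a < length L \<and> b < length L \<and> fst (L ! a) = fst (L ! b) \<and>
        snd (L ! a) < snd (L ! b) \<longrightarrow> a < b"
    using V[unfolded valid_order_def]
    by (rule conjunct1, rule conjunct1[OF conjunct2], rule conjunct2[OF conjunct2[OF conjunct2]])
  have sw: "sorted_wrt (\<lambda>p q. fst p = fst q \<longrightarrow> snd p < snd q) L"
    unfolding sorted_wrt_iff_nth_less
  proof (intro allI impI)
    fix a b assume ab: "a < b" "b < length L" and f: "fst (L!a) = fst (L!b)"
    show "snd (L!a) < snd (L!b)"
    proof (rule ccontr)
      assume "\<not> ?thesis"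
      then consider "snd (L!b) < snd (L!a)" | "snd (L!a) = snd (L!b)" by linarith
      then show False
      proof cases
        case 1
        moreover have "a < length L" using ab by simp
        ultimately have "b < a" using ord[rule_format, of b a] ab f by simp
        then show False using ab by simp
      next
        case 2
        then have "L!a = L!b" using f by (simp add: prod_eq_iff)
        then have "a = b" using dist ab by (simp add: nth_eq_iff_index_eq)
        then show False using ab by simp
      qed
    qed
  qed
  have "sorted_wrt (\<lambda>p q. fst p = fst q \<longrightarrow> snd p < snd q) ?F" using sw by (rule sorted_wrt_filter)
  then have "sorted_wrt (\<lambda>p q. snd p < snd q) ?F"
    by (rule sorted_wrt_mono_rel[rotated]) simp
  then have s1: "sorted_wrt (<) (map snd ?F)" by (simp add: sorted_wrt_map)
  have s2: "set (map snd ?F) = {1..<k i}"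
  proof
    show "set (map snd ?F) \<subseteq> {1..<k i}"
    proof
      fix j assume "j \<in> set (map snd ?F)"
      then obtain p where p: "p \<in> set L" "fst p = i" "j = snd p" by auto
      then have "p \<in> {(i, j). 1 \<le> j \<and> j \<le> k i - 1}" using setL by blast
      then show "j \<in> {1..<k i}" using p by (cases p) auto
    qed
    show "{1..<k i} \<subseteq> set (map snd ?F)"
    proof
      fix j assume "j \<in> {1..<k i}"
      then have "(i, j) \<in> set L" using setL by auto
      then have "(i, j) \<in> set ?F" by simp
      then have "snd (i, j) \<in> snd ` set ?F" by (rule imageI)
      then show "j \<in> set (map snd ?F)" by simp
    qed
  qed
  have s3: "sorted (map snd ?F)" "distinct (map snd ?F)" using s1 by (simp_all add: strict_sorted_iff)
  show ?thesis
    by (rule sorted_distinct_set_unique[OF s3 sorted_upt distinct_upt]) (simp only: s2 set_upt)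
qed

lemma valid_count:
  assumes V: "valid_order k \<sigma> L"
  shows "count (mset (map fst L)) q = k q - 1"
proof -
  have "count (mset (map fst L)) q = length (map snd (filter (\<lambda>p. fst p = q) L))"
    by (simp add: filt_cnt)
  also have "\<dots> = k q - 1" using valid_chain[OF V, of q] by simp
  finally show ?thesis .
qed

lemma valid_snd:
  fixes L :: "('n \<times> nat) list"
  assumes V: "valid_order k \<sigma> L" and m: "m < length L"
  shows "snd (L!m) = count (mset (take (Suc m) (map fst L))) (fst (L!m))"
proof -
  define i where "i = fst (L!m)"
  define P where "P = (\<lambda>p::'n \<times> nat. fst p = i)"
  have t: "take (Suc m) L = take m L @ [L!m]" using m by (simp add: take_Suc_conv_app_nth)
  define c where "c = length (filter P (take (Suc m) L))"
  have fc: "filter P (take (Suc m) L) = filter P (take m L) @ [L!m]" by (simp add: t P_def i_def)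
  have cpos: "c = Suc (length (filter P (take m L)))" by (simp add: c_def fc)
  have "filter P L = filter P (take (Suc m) L) @ filter P (drop (Suc m) L)"
    by (simp flip: filter_append)
  then have F: "filter P L = filter P (take m L) @ [L!m] @ filter P (drop (Suc m) L)"
    by (simp add: fc)
  have n1: "filter P L ! (c - 1) = L!m" using cpos F by (simp add: nth_append)
  have l1: "c - 1 < length (filter P L)" using cpos F by simp
  have ch: "map snd (filter P L) = [1..<k i]" unfolding P_def by (rule valid_chain[OF V])
  have "snd (L!m) = map snd (filter P L) ! (c - 1)" using n1 l1 by simp
  also have "\<dots> = [1..<k i] ! (c - 1)" by (simp add: ch)
  also have "\<dots> = c"
  proof -
    have "c - 1 < length [1..<k i]" using l1 ch by (metis length_map)
    then have "1 + (c - 1) < k i" by simp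
    then show ?thesis using cpos by (simp add: nth_upt)
  qed
  also have "c = count (mset (take (Suc m) (map fst L))) i"
    unfolding c_def P_def by (simp add: filt_cnt take_map)
  finally show ?thesis by (simp add: i_def)
qed

lemma valid_exists:
  fixes k :: "'n::finite \<Rightarrow> nat"
  assumes dec: "\<sigma> \<in> dec_set k"
  shows "\<exists>L. valid_order k \<sigma> L"
proof -
  define P where "P = {(i, j). 1 \<le> j \<and> j \<le> k i - 1}"
  have "P \<subseteq> UNIV \<times> {..Max (range k)}"
  proof
    fix p assume "p \<in> P"
    then have "snd p \<le> k (fst p)" by (auto simp: P_def)
    also have "k (fst p) \<le> Max (range k)" by (rule Max_ge) auto
    finally show "p \<in> UNIV \<times> {..Max (range k)}" by (cases p) auto
  qed
  then have "finite P" by (rule finite_subset) auto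
  then obtain xs where xs: "distinct xs" "set xs = P" using finite_distinct_list by blast
  define key where "key = (\<lambda>p. [- \<sigma> (fst p) (snd p), real (snd p)])"
  define L where "L = sort_key key xs"
  have dL: "distinct L" and sL: "set L = P" using xs by (simp_all add: L_def)
  have so: "sorted (map key L)" by (simp add: L_def)
  have kle: "\<And>a b. a \<le> b \<Longrightarrow> b < length L \<Longrightarrow> key (L!a) \<le> key (L!b)"
    using sorted_nth_mono[OF so] by simp
  have c1: "\<forall>a b. a < b \<and> b < length L \<longrightarrow>
        \<sigma> (fst (L ! a)) (snd (L ! a)) \<ge> \<sigma> (fst (L ! b)) (snd (L ! b))"
  proof (intro allI impI)
    fix a b assume "a < b \<and> b < length L"
    then have "key (L!a) \<le> key (L!b)" using kle by simp
    then have "[- \<sigma> (fst (L!a)) (snd (L!a)), real (snd (L!a))] \<le> [- \<sigma> (fst (L!b)) (snd (L!b)), real (snd (L!b))]"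
      by (simp only: key_def)
    then have "- \<sigma> (fst (L!a)) (snd (L!a)) \<le> - \<sigma> (fst (L!b)) (snd (L!b)) \<and>
       (- \<sigma> (fst (L!a)) (snd (L!a)) = - \<sigma> (fst (L!b)) (snd (L!b)) \<longrightarrow> real (snd (L!a)) \<le> real (snd (L!b)))"
      by (rule lex2)
    then have "- \<sigma> (fst (L!a)) (snd (L!a)) \<le> - \<sigma> (fst (L!b)) (snd (L!b))" by (rule conjunct1)
    then show "\<sigma> (fst (L ! a)) (snd (L ! a)) \<ge> \<sigma> (fst (L ! b)) (snd (L ! b))"
      by linarith
  qed
  have c2: "\<forall>a b. a < length L \<and> b < length L \<and> fst (L ! a) = fst (L ! b) \<and>
        snd (L ! a) < snd (L ! b) \<longrightarrow> a < b"
  proof (intro allI impI)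
    fix a b assume H: "a < length L \<and> b < length L \<and> fst (L ! a) = fst (L ! b) \<and> snd (L ! a) < snd (L ! b)"
    show "a < b"
    proof (rule ccontr)
      assume "\<not> a < b"
      then have "b \<le> a" by simp
      then have "key (L!b) \<le> key (L!a)" using kle H by simp
      then have "[- \<sigma> (fst (L!b)) (snd (L!b)), real (snd (L!b))] \<le> [- \<sigma> (fst (L!a)) (snd (L!a)), real (snd (L!a))]"
        by (simp only: key_def)
      then have "- \<sigma> (fst (L!b)) (snd (L!b)) \<le> - \<sigma> (fst (L!a)) (snd (L!a)) \<and>
         (- \<sigma> (fst (L!b)) (snd (L!b)) = - \<sigma> (fst (L!a)) (snd (L!a)) \<longrightarrow> real (snd (L!b)) \<le> real (snd (L!a)))"
        by (rule lex2)
      then have k2a: "\<sigma> (fst (L!a)) (snd (L!a)) \<le> \<sigma> (fst (L!b)) (snd (L!b))"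
        and k2b: "\<sigma> (fst (L!a)) (snd (L!a)) = \<sigma> (fst (L!b)) (snd (L!b)) \<Longrightarrow> snd (L!b) \<le> snd (L!a)"
        by auto
      have "L!a \<in> P" "L!b \<in> P" using H sL nth_mem by blast+
      then have 1: "1 \<le> snd (L!a)" "snd (L!b) \<le> k (fst (L!b)) - 1" by (auto simp: P_def split: prod.splits)
      have "snd (L!a) \<le> snd (L!b)" using H by simp
      then have A: "\<sigma> (fst (L!b)) (snd (L!b)) \<le> \<sigma> (fst (L!b)) (snd (L!a))"
        using dec_mono[OF dec 1(1) _ 1(2)] by blast
      have E: "fst (L!a) = fst (L!b)" using H by simp
      have A2: "\<sigma> (fst (L!b)) (snd (L!b)) \<le> \<sigma> (fst (L!a)) (snd (L!a))" using A by (simp only: E)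
      have lt: "snd (L!a) < snd (L!b)" using H by simp
      have "\<sigma> (fst (L!a)) (snd (L!a)) = \<sigma> (fst (L!b)) (snd (L!b))" using k2a A2 by linarith
      then have "snd (L!b) \<le> snd (L!a)" by (rule k2b)
      then show False using lt by linarith
    qed
  qed
  have "valid_order k \<sigma> L" unfolding valid_order_def using dL sL c1 c2 unfolding P_def by blast
  then show ?thesis by blast
qed

lemma hdown_rep:
  fixes k :: "'n::finite \<Rightarrow> nat"
  assumes dec: "\<sigma> \<in> dec_set k"
  shows "\<exists>w. hdown Hd k \<sigma> = Hd (\<lambda>_. 0) + Gr Hd \<sigma> (\<lambda>_. 0) w \<and>
     sorted_wrt (\<ge>) (vals \<sigma> (\<lambda>_. 0) w) \<and> (\<forall>q. (\<lambda>_. 0) q + count (mset w) q = k q - 1)"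
proof -
  define L where "L = (SOME L. valid_order k \<sigma> L)"
  have V: "valid_order k \<sigma> L" unfolding L_def using valid_exists[OF dec] by (rule someI_ex)
  define w where "w = map fst L"
  have cp: "\<And>n. chain_pt L n = (\<lambda>q. (\<lambda>_. 0::nat) q + count (mset (take n w)) q)"
    by (simp add: chain_pt_def fun_eq_iff filt_cnt w_def take_map)
  have sn: "\<And>m. m < length w \<Longrightarrow> \<sigma> (fst (L!m)) (snd (L!m)) =
      \<sigma> (w!m) ((\<lambda>_. 0::nat) (w!m) + count (mset (take (Suc m) w)) (w!m))"
    using valid_snd[OF V] by (simp add: w_def)
  have "hdown Hd k \<sigma> = Hd (\<lambda>_. 0) + (\<Sum>m<length L. \<sigma> (fst (L ! m)) (snd (L ! m)) *
          (Hd (chain_pt L (Suc m)) - Hd (chain_pt L m)))"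
    unfolding hdown_def L_def[symmetric] Let_def ..
  also have "\<dots> = Hd (\<lambda>_. 0) + (\<Sum>m<length w. \<sigma> (w!m) ((\<lambda>_. 0::nat) (w!m) + count (mset (take (Suc m) w)) (w!m)) *
     (Hd (\<lambda>q. (\<lambda>_. 0::nat) q + count (mset (take (Suc m) w)) q) - Hd (\<lambda>q. (\<lambda>_. 0::nat) q + count (mset (take m w)) q)))"
  proof -
    have lw: "length w = length L" by (simp add: w_def)
    have "\<And>m. m \<in> {..<length L} \<Longrightarrow> \<sigma> (fst (L ! m)) (snd (L ! m)) *
          (Hd (chain_pt L (Suc m)) - Hd (chain_pt L m)) =
       \<sigma> (w!m) ((\<lambda>_. 0::nat) (w!m) + count (mset (take (Suc m) w)) (w!m)) *
     (Hd (\<lambda>q. (\<lambda>_. 0::nat) q + count (mset (take (Suc m) w)) q) - Hd (\<lambda>q. (\<lambda>_. 0::nat) q + count (mset (take m w)) q))"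
    proof -
      fix m assume "m \<in> {..<length L}"
      then have mw: "m < length w" by (simp add: lw)
      show "?thesis m" by (simp only: sn[OF mw] cp)
    qed
    then show ?thesis unfolding lw by (metis (no_types, lifting) sum.cong)
  qed
  also have "\<dots> = Hd (\<lambda>_. 0) + Gr Hd \<sigma> (\<lambda>_. 0) w" using sum_Gr[where b="\<lambda>_. 0" and w=w and \<sigma>=\<sigma> and Hd=Hd] by simp
  finally have h: "hdown Hd k \<sigma> = Hd (\<lambda>_. 0) + Gr Hd \<sigma> (\<lambda>_. 0) w" .
  have s: "sorted_wrt (\<ge>) (vals \<sigma> (\<lambda>_. 0) w)"
    unfolding sorted_wrt_iff_nth_less
  proof (intro allI impI)
    fix a b assume ab: "a < b" "b < length (vals \<sigma> (\<lambda>_. 0) w)"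
    then have bw: "b < length w" and aw: "a < length w" by auto
    have "vals \<sigma> (\<lambda>_. 0) w ! b = \<sigma> (fst (L!b)) (snd (L!b))" using vals_nth[OF bw] sn[OF bw] by simp
    moreover have "vals \<sigma> (\<lambda>_. 0) w ! a = \<sigma> (fst (L!a)) (snd (L!a))" using vals_nth[OF aw] sn[OF aw] by simp
    moreover have "\<sigma> (fst (L!b)) (snd (L!b)) \<le> \<sigma> (fst (L!a)) (snd (L!a))"
    proof -
      have o: "\<forall>a b. a < b \<and> b < length L \<longrightarrow>
        \<sigma> (fst (L ! a)) (snd (L ! a)) \<ge> \<sigma> (fst (L ! b)) (snd (L ! b))"
        using V[unfolded valid_order_def] by (rule conjunct1[OF conjunct2[OF conjunct2]])
      have "b < length L" using bw by (simp add: w_def)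
      then show ?thesis using o[rule_format, of a b] ab(1) by blast
    qed
    ultimately show "vals \<sigma> (\<lambda>_. 0) w ! b \<le> vals \<sigma> (\<lambda>_. 0) w ! a" by simp
  qed
  have c: "\<forall>q. (\<lambda>_. 0) q + count (mset w) q = k q - 1"
    using valid_count[OF V] by (simp add: w_def)
  show ?thesis using h s c by blast
qed

lemma hdown_lower:
  fixes k :: "'n::finite \<Rightarrow> nat"
  assumes SM: "SMg Hd k" and dec: "\<sigma> \<in> dec_set k" and kp: "\<forall>q. 1 \<le> k q"
    and cw: "\<forall>q. (\<lambda>_. 0) q + count (mset w) q = k q - 1"
  shows "Hd (\<lambda>_. 0) + Gr Hd \<sigma> (\<lambda>_. 0) w \<le> hdown Hd k \<sigma>"
proof -
  obtain ws where h: "hdown Hd k \<sigma> = Hd (\<lambda>_. 0) + Gr Hd \<sigma> (\<lambda>_. 0) ws"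
    and s: "sorted_wrt (\<ge>) (vals \<sigma> (\<lambda>_. 0) ws)" and c: "\<forall>q. (\<lambda>_. 0) q + count (mset ws) q = k q - 1"
    using hdown_rep[OF dec] by blast
  have "mset w = mset ws" unfolding multiset_eq_iff
  proof
    fix q show "count (mset w) q = count (mset ws) q" using cw[rule_format, of q] c[rule_format, of q] by simp
  qed
  then have "Gr Hd \<sigma> (\<lambda>_. 0) w \<le> Gr Hd \<sigma> (\<lambda>_. 0) ws"
    using Gr_greedy[OF SM dec kp, rule_format, OF _ s c[rule_format]] by blast
  then show ?thesis using h by simp
qed

lemma lim_nonneg:
  fixes a M d :: real
  assumes H: "\<And>\<epsilon>. 0 < \<epsilon> \<Longrightarrow> \<epsilon> \<le> d \<Longrightarrow> 0 \<le> a + \<epsilon> * M" and d: "0 < d"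
  shows "0 \<le> a"
proof (rule ccontr)
  assume "\<not> 0 \<le> a"
  then have a: "a < 0" by simp
  define \<epsilon> where "\<epsilon> = min d (- a / (2 * (\<bar>M\<bar> + 1)))"
  have pos: "0 < - a / (2 * (\<bar>M\<bar> + 1))" by (intro divide_pos_pos) (use a in auto)
  have e0: "0 < \<epsilon>" using d pos by (simp add: \<epsilon>_def)
  have e1: "\<epsilon> \<le> d" by (simp add: \<epsilon>_def)
  have "\<epsilon> * M \<le> \<epsilon> * \<bar>M\<bar>" using e0 by (intro mult_left_mono) auto
  also have "\<dots> \<le> (- a / (2 * (\<bar>M\<bar> + 1))) * \<bar>M\<bar>"
    by (intro mult_right_mono) (auto simp: \<epsilon>_def)
  also have "\<dots> = (- a / 2) * (\<bar>M\<bar> / (\<bar>M\<bar> + 1))" by (simp add: field_simps)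
  also have "\<dots> \<le> (- a / 2) * 1"
    using a by (intro mult_left_mono) auto
  finally have "a + \<epsilon> * M < 0" using a by linarith
  then show False using H[OF e0 e1] by linarith
qed

lemma tele:
  fixes g :: "nat \<Rightarrow> real"
  assumes "t \<le> n"
  shows "(\<Sum>j\<in>{1..n}. if j \<le> t then g j - g (j - 1) else 0) = g t - g 0"
proof -
  have "(\<Sum>j\<in>{1..n}. if j \<le> t then g j - g (j - 1) else 0) = (\<Sum>j\<in>{1..n} \<inter> {j. j \<le> t}. g j - g (j - 1))"
    using sum.inter_restrict[of "{1..n}" "\<lambda>j. g j - g (j - 1)" "{j. j \<le> t}"] by simp
  also have "{1..n} \<inter> {j. j \<le> t} = {1..t}" using assms by auto
  also have "(\<Sum>j\<in>{1..t}. g j - g (j - 1)) = g t - g 0"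
    by (induction t) (simp_all add: sum.cl_ivl_Suc)
  finally show ?thesis .
qed

theorem lemma2:
  fixes l u :: "real ^ 'n"
    and H :: "real ^ 'n \<Rightarrow> real"
    and R :: "'n \<Rightarrow> real \<Rightarrow> real"
    and k :: "'n \<Rightarrow> nat"
    and A :: "'n \<Rightarrow> nat \<Rightarrow> real"
    and \<rho>s :: "'n \<Rightarrow> nat \<Rightarrow> real"
  defines "Hd \<equiv> (\<lambda>x. H (\<chi> i. A i (x i)))"
    and "Rdsum \<equiv> (\<lambda>x. \<Sum>i\<in>UNIV. R i (A i (x i)))"
    and "F \<equiv> (\<lambda>\<rho>. hdown (\<lambda>x. H (\<chi> i. A i (x i))) k \<rho> +
              (\<Sum>i\<in>UNIV. \<Sum>j\<in>{1..k i - 1}. (1/2) * (\<rho> i j)^2 * (R i (A i j) - R i (A i (j - 1)))))"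
  assumes lu: "l \<le> u"
    and Hcont: "continuous_on (cbox l u) H"
    and Hsub: "submodular_on (cbox l u) H"
    and Rmono: "\<forall>i. strict_mono_on {l $ i .. u $ i} (R i)"
    and kpos: "\<forall>i. 1 \<le> k i"
    and Amono: "\<forall>i. mono_on {..< k i} (A i)"
    and A0: "\<forall>i. A i 0 = l $ i"
    and Atop: "\<forall>i. A i (k i - 1) = u $ i"
    and \<rho>s_mem: "\<rho>s \<in> dec_set k"
    and \<rho>s_min: "\<forall>\<rho>\<in>dec_set k. F \<rho>s \<le> F \<rho>"
  shows "fconvex (dec_set k) \<and> fconvex_on (dec_set k) F \<and>
    (\<forall>lam::real.
       (let xlam = (\<lambda>i. if \<exists>j. 1 \<le> j \<and> j \<le> k i - 1 \<and> \<rho>s i j \<ge> lam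
                      then Max {j. 1 \<le> j \<and> j \<le> k i - 1 \<and> \<rho>s i j \<ge> lam} else 0)
        in xlam \<in> grid k \<and>
           (\<forall>x\<in>grid k. Hd xlam + lam * Rdsum xlam \<le> Hd x + lam * Rdsum x)))"
proof -
  have kp: "\<forall>q. 1 \<le> k q" using kpos .
  have Amon: "\<And>i a b. a < k i \<Longrightarrow> b < k i \<Longrightarrow> a \<le> b \<Longrightarrow> A i a \<le> A i b"
  proof -
    fix i a b assume "a < k i" "b < k i" "a \<le> b"
    moreover have "mono_on {..<k i} (A i)" using Amono by simp
    ultimately show "A i a \<le> A i b" by (intro mono_onD[of "{..<k i}" "A i"]) auto
  qed
  have Arng: "\<And>i j. j < k i \<Longrightarrow> l $ i \<le> A i j \<and> A i j \<le> u $ i"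
  proof -
    fix i j assume j: "j < k i"
    have "A i 0 \<le> A i j" using Amon[of 0 i j] j by simp
    moreover have "A i j \<le> A i (k i - 1)" using Amon[of j i "k i - 1"] j by simp
    ultimately show "l $ i \<le> A i j \<and> A i j \<le> u $ i" using A0 Atop by simp
  qed
  have Amax: "\<And>i a b. a < k i \<Longrightarrow> b < k i \<Longrightarrow> A i (max a b) = max (A i a) (A i b)"
  proof -
    fix i a b assume ab: "a < k i" "b < k i"
    show "A i (max a b) = max (A i a) (A i b)"
    proof (cases "a \<le> b")
      case True
      then show ?thesis using Amon[OF ab True] by (simp add: max_def)
    next
      case False
      then have "b \<le> a" by simp
      then show ?thesis using Amon[OF ab(2) ab(1)] False by (simp add: max_def)
    qed
  qed
  have Amin: "\<And>i a b. a < k i \<Longrightarrow> b < k i \<Longrightarrow> A i (min a b) = min (A i a) (A i b)"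
  proof -
    fix i a b assume ab: "a < k i" "b < k i"
    show "A i (min a b) = min (A i a) (A i b)"
    proof (cases "a \<le> b")
      case True
      then show ?thesis using Amon[OF ab True] by (simp add: min_def)
    next
      case False
      then have "b \<le> a" by simp
      then show ?thesis using Amon[OF ab(2) ab(1)] False by (simp add: min_def)
    qed
  qed
  have SM: "SMg Hd k"
    unfolding SMg_def
  proof (intro ballI)
    fix X Y assume X: "X \<in> grid k" and Y: "Y \<in> grid k"
    define vX where "vX = (\<chi> i. A i (X i))"
    define vY where "vY = (\<chi> i. A i (Y i))"
    have vXc: "vX \<in> cbox l u" unfolding vX_def mem_box_cart using Arng X by (auto simp: grid_def)
    have vYc: "vY \<in> cbox l u" unfolding vY_def mem_box_cart using Arng Y by (auto simp: grid_def)
    have sup: "sup vX vY = (\<chi> i. A i (max (X i) (Y i)))"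
      unfolding vX_def vY_def sup_vec_def using X Y by (simp add: Amax grid_def sup_max)
    have inf: "inf vX vY = (\<chi> i. A i (min (X i) (Y i)))"
      unfolding vX_def vY_def inf_vec_def using X Y by (simp add: Amin grid_def inf_min)
    have "H (sup vX vY) + H (inf vX vY) \<le> H vX + H vY"
      using Hsub[unfolded submodular_on_def, rule_format, OF vXc vYc] .
    then have "H (\<chi> i. A i (max (X i) (Y i))) + H (\<chi> i. A i (min (X i) (Y i))) \<le> H vX + H vY"
      by (simp only: sup inf)
    then show "Hd (\<lambda>i. max (X i) (Y i)) + Hd (\<lambda>i. min (X i) (Y i)) \<le> Hd X + Hd Y"
      unfolding Hd_def vX_def vY_def by simp
  qed
  have cnn: "\<And>i j. 1 \<le> j \<Longrightarrow> j \<le> k i - 1 \<Longrightarrow> 0 \<le> R i (A i j) - R i (A i (j - 1))"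
  proof -
    fix i j assume j: "1 \<le> j" "j \<le> k i - 1"
    have jk: "j < k i" "j - 1 < k i" using j kpos by (auto simp: le_diff_conv2)
    have "A i (j - 1) \<le> A i j" using Amon[OF jk(2) jk(1)] by simp
    moreover have "A i (j - 1) \<in> {l $ i .. u $ i}" "A i j \<in> {l $ i .. u $ i}" using Arng jk by auto
    ultimately have "R i (A i (j - 1)) \<le> R i (A i j)"
      using strict_mono_on_leD[OF Rmono[rule_format, of i]] by blast
    then show "0 \<le> R i (A i j) - R i (A i (j - 1))" by simp
  qed
  define Q where "Q = (\<lambda>\<rho>::'n \<Rightarrow> nat \<Rightarrow> real. \<Sum>i\<in>UNIV. \<Sum>j\<in>{1..k i - 1}. (1/2) * (\<rho> i j)^2 * (R i (A i j) - R i (A i (j - 1))))"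
  have FQ: "\<And>\<rho>. F \<rho> = hdown Hd k \<rho> + Q \<rho>" unfolding F_def Q_def Hd_def by simp
  have P1: "fconvex (dec_set k)"
    unfolding fconvex_def dec_set_def comb_def
    by (auto intro!: add_mono mult_left_mono)
  have P2: "fconvex_on (dec_set k) F"
    unfolding fconvex_on_def
  proof (intro ballI allI impI)
    fix \<rho> \<sigma> and t :: real assume \<rho>: "\<rho> \<in> dec_set k" and \<sigma>: "\<sigma> \<in> dec_set k" and t: "0 \<le> t \<and> t \<le> 1"
    have cm: "comb t \<rho> \<sigma> \<in> dec_set k" using P1 \<rho> \<sigma> t unfolding fconvex_def by blast
    obtain w where h: "hdown Hd k (comb t \<rho> \<sigma>) = Hd (\<lambda>_. 0) + Gr Hd (comb t \<rho> \<sigma>) (\<lambda>_. 0) w"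
      and cw: "\<forall>q. (\<lambda>_. 0) q + count (mset w) q = k q - 1"
      using hdown_rep[OF cm] by blast
    have lin: "Gr Hd (comb t \<rho> \<sigma>) (\<lambda>_. 0) w = t * Gr Hd \<rho> (\<lambda>_. 0) w + (1 - t) * Gr Hd \<sigma> (\<lambda>_. 0) w"
      unfolding comb_def by (rule Gr_lin)
    have l1: "Hd (\<lambda>_. 0) + Gr Hd \<rho> (\<lambda>_. 0) w \<le> hdown Hd k \<rho>" by (rule hdown_lower[OF SM \<rho> kp cw])
    have l2: "Hd (\<lambda>_. 0) + Gr Hd \<sigma> (\<lambda>_. 0) w \<le> hdown Hd k \<sigma>" by (rule hdown_lower[OF SM \<sigma> kp cw])
    have hh: "hdown Hd k (comb t \<rho> \<sigma>) \<le> t * hdown Hd k \<rho> + (1 - t) * hdown Hd k \<sigma>"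
    proof -
      have "hdown Hd k (comb t \<rho> \<sigma>) = t * (Hd (\<lambda>_. 0) + Gr Hd \<rho> (\<lambda>_. 0) w) + (1 - t) * (Hd (\<lambda>_. 0) + Gr Hd \<sigma> (\<lambda>_. 0) w)"
        using h lin by (simp add: algebra_simps)
      also have "\<dots> \<le> t * hdown Hd k \<rho> + (1 - t) * hdown Hd k \<sigma>"
        using l1 l2 t by (intro add_mono mult_left_mono) auto
      finally show ?thesis .
    qed
    have qq: "Q (comb t \<rho> \<sigma>) \<le> t * Q \<rho> + (1 - t) * Q \<sigma>"
    proof -
      have trm: "(1/2) * (comb t \<rho> \<sigma> i j)^2 * (R i (A i j) - R i (A i (j - 1)))
         \<le> t * ((1/2) * (\<rho> i j)^2 * (R i (A i j) - R i (A i (j - 1)))) +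
           (1 - t) * ((1/2) * (\<sigma> i j)^2 * (R i (A i j) - R i (A i (j - 1))))"
        if j: "j \<in> {1..k i - 1}" for i j
      proof -
        define a where "a = \<rho> i j"
        define b where "b = \<sigma> i j"
        define c where "c = R i (A i j) - R i (A i (j - 1))"
        have c0: "0 \<le> c" using cnn j by (simp add: c_def)
        have e: "t * a^2 + (1 - t) * b^2 - (t * a + (1 - t) * b)^2 = t * (1 - t) * (a - b)^2"
          by (simp add: power2_eq_square algebra_simps)
        have "0 \<le> t * (1 - t) * (a - b)^2" using t by simp
        then have sq: "(t * a + (1 - t) * b)^2 \<le> t * a^2 + (1 - t) * b^2" using e by linarith
        have ineq: "(1/2) * (t * a + (1 - t) * b)^2 * c \<le> (1/2) * (t * a^2 + (1 - t) * b^2) * c"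
          using sq c0 by (intro mult_right_mono) auto
        have e1: "(1/2) * (comb t \<rho> \<sigma> i j)^2 * (R i (A i j) - R i (A i (j - 1))) = (1/2) * (t * a + (1 - t) * b)^2 * c"
          by (simp add: comb_def a_def b_def c_def)
        have e2: "t * ((1/2) * (\<rho> i j)^2 * (R i (A i j) - R i (A i (j - 1)))) +
           (1 - t) * ((1/2) * (\<sigma> i j)^2 * (R i (A i j) - R i (A i (j - 1)))) = t * ((1/2) * a^2 * c) + (1 - t) * ((1/2) * b^2 * c)"
          by (simp only: a_def b_def c_def)
        have e3: "t * ((1/2) * a^2 * c) + (1 - t) * ((1/2) * b^2 * c) = (1/2) * (t * a^2 + (1 - t) * b^2) * c"
          by (simp add: field_simps)
        show ?thesis using ineq e1 e2 e3 by linarith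
      qed
      have "Q (comb t \<rho> \<sigma>) \<le> (\<Sum>i\<in>UNIV. \<Sum>j\<in>{1..k i - 1}.
           t * ((1/2) * (\<rho> i j)^2 * (R i (A i j) - R i (A i (j - 1)))) +
           (1 - t) * ((1/2) * (\<sigma> i j)^2 * (R i (A i j) - R i (A i (j - 1)))))"
        unfolding Q_def by (intro sum_mono trm)
      also have "\<dots> = t * Q \<rho> + (1 - t) * Q \<sigma>"
        unfolding Q_def by (simp add: sum.distrib sum_distrib_left)
      finally show ?thesis .
    qed
    show "F (comb t \<rho> \<sigma>) \<le> t * F \<rho> + (1 - t) * F \<sigma>"
      using hh qq unfolding FQ by (simp add: algebra_simps)
  qed
  have P3: "(let xlam = (\<lambda>i. if \<exists>j. 1 \<le> j \<and> j \<le> k i - 1 \<and> \<rho>s i j \<ge> lam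
                      then Max {j. 1 \<le> j \<and> j \<le> k i - 1 \<and> \<rho>s i j \<ge> lam} else 0)
        in xlam \<in> grid k \<and>
           (\<forall>x\<in>grid k. Hd xlam + lam * Rdsum xlam \<le> Hd x + lam * Rdsum x))" for lam
  proof -
    define x where "x = (\<lambda>i. if \<exists>j. 1 \<le> j \<and> j \<le> k i - 1 \<and> \<rho>s i j \<ge> lam
                      then Max {j. 1 \<le> j \<and> j \<le> k i - 1 \<and> \<rho>s i j \<ge> lam} else 0)"
    have thr: "\<And>i j. 1 \<le> j \<Longrightarrow> j \<le> k i - 1 \<Longrightarrow> (lam \<le> \<rho>s i j \<longleftrightarrow> j \<le> x i)"
    proof -
      fix i j assume j: "1 \<le> j" "j \<le> k i - 1"
      let ?S = "{j. 1 \<le> j \<and> j \<le> k i - 1 \<and> \<rho>s i j \<ge> lam}"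
      have fin: "finite ?S" by (rule finite_subset[of _ "{..k i - 1}"]) auto
      show "lam \<le> \<rho>s i j \<longleftrightarrow> j \<le> x i"
      proof
        assume "lam \<le> \<rho>s i j"
        then have jS: "j \<in> ?S" using j by simp
        then have ex: "\<exists>j. 1 \<le> j \<and> j \<le> k i - 1 \<and> \<rho>s i j \<ge> lam" by blast
        have "j \<le> Max ?S" using fin jS by (rule Max_ge)
        then show "j \<le> x i" using ex by (simp add: x_def)
      next
        assume jx: "j \<le> x i"
        have ex: "\<exists>j. 1 \<le> j \<and> j \<le> k i - 1 \<and> \<rho>s i j \<ge> lam"
        proof (rule ccontr)
          assume nex: "\<not> ?thesis"
          have "x i = 0" unfolding x_def using nex by (rule if_not_P)
          then show False using jx j by simp
        qed
        then have xm: "x i = Max ?S" by (simp add: x_def)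
        have ne: "?S \<noteq> {}" using ex by blast
        have "Max ?S \<in> ?S" using fin ne by (rule Max_in)
        then have m: "1 \<le> Max ?S" "Max ?S \<le> k i - 1" "lam \<le> \<rho>s i (Max ?S)" by auto
        have "j \<le> Max ?S" using jx xm by simp
        then have "\<rho>s i (Max ?S) \<le> \<rho>s i j" using dec_mono[OF \<rho>s_mem j(1) _ m(2)] by blast
        then show "lam \<le> \<rho>s i j" using m by linarith
      qed
    qed
    have xg: "x \<in> grid k"
      unfolding grid_def
    proof (intro CollectI allI)
      fix i
      show "x i < k i"
      proof (cases "\<exists>j. 1 \<le> j \<and> j \<le> k i - 1 \<and> \<rho>s i j \<ge> lam")
        case True
        let ?S = "{j. 1 \<le> j \<and> j \<le> k i - 1 \<and> \<rho>s i j \<ge> lam}"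
        have fin: "finite ?S" by (rule finite_subset[of _ "{..k i - 1}"]) auto
        have ne: "?S \<noteq> {}" using True by blast
        have "Max ?S \<in> ?S" using fin ne by (rule Max_in)
        then have "Max ?S \<le> k i - 1" by simp
        moreover have "1 \<le> k i" using kpos by simp
        ultimately show ?thesis using True by (simp add: x_def)
      next
        case False
        have "x i = 0" unfolding x_def using False by (rule if_not_P)
        moreover have "1 \<le> k i" using kpos by simp
        ultimately show ?thesis by simp
      qed
    qed
    obtain e0 where e0: "0 < e0" and gap: "\<And>i j. 1 \<le> j \<Longrightarrow> j \<le> k i - 1 \<Longrightarrow> \<rho>s i j < lam \<Longrightarrow> \<rho>s i j + 2 * e0 \<le> lam"
    proof -
      define P where "P = {(i, j). 1 \<le> j \<and> j \<le> k i - 1}"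
      have "P \<subseteq> UNIV \<times> {..Max (range k)}"
      proof
        fix p assume "p \<in> P"
        then have "snd p \<le> k (fst p)" by (auto simp: P_def)
        also have "k (fst p) \<le> Max (range k)" by (rule Max_ge) auto
        finally show "p \<in> UNIV \<times> {..Max (range k)}" by (cases p) auto
      qed
      then have finP: "finite P" by (rule finite_subset) auto
      define S where "S = (\<lambda>p. \<rho>s (fst p) (snd p)) ` {p \<in> P. \<rho>s (fst p) (snd p) < lam}"
      have finS: "finite S" using finP by (simp add: S_def)
      show ?thesis
      proof (cases "S = {}")
        case True
        show ?thesis
        proof (rule that[of 1])
          fix i j assume "1 \<le> j" "j \<le> k i - 1" "\<rho>s i j < lam"
          then have "\<rho>s i j \<in> S" unfolding S_def P_def by (auto intro!: image_eqI[where x="(i, j)"])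
          then show "\<rho>s i j + 2 * 1 \<le> lam" using True by simp
        qed simp
      next
        case False
        define m where "m = Max S"
        have "m \<in> S" using finS False by (simp add: m_def)
        then have mlt: "m < lam" by (auto simp: S_def)
        show ?thesis
        proof (rule that[of "(lam - m) / 2"])
          show "0 < (lam - m) / 2" using mlt by simp
          fix i j assume "1 \<le> j" "j \<le> k i - 1" "\<rho>s i j < lam"
          then have "\<rho>s i j \<in> S" unfolding S_def P_def by (auto intro!: image_eqI[where x="(i, j)"])
          then have "\<rho>s i j \<le> m" using finS by (simp add: m_def)
          moreover have "2 * ((lam - m) / 2) = lam - m" by simp
          ultimately show "\<rho>s i j + 2 * ((lam - m) / 2) \<le> lam" by linarith
        qed
      qed
    qed
    have main: "\<forall>y\<in>grid k. Hd x + lam * Rdsum x \<le> Hd y + lam * Rdsum y"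
    proof
      fix y assume yg: "y \<in> grid k"
      define a where "a = Hd y - Hd x + lam * (Rdsum y - Rdsum x)"
      define e where "e = (\<lambda>i j. 1 * ind y i j + (-1) * ind x i j)"
      define c where "c = (\<lambda>i j. R i (A i j) - R i (A i (j - 1)))"
      define K where "K = (\<Sum>i\<in>UNIV. \<Sum>j\<in>{1..k i - 1}. (e i j)^2 * c i j)"
      have eb: "\<And>i j. e i j = (if j \<le> y i then 1 else 0) - (if j \<le> x i then 1 else 0)"
        by (simp add: e_def ind_def)
      have yk: "\<And>i. y i \<le> k i - 1" "\<And>i. x i \<le> k i - 1"
      proof -
        fix i
        have "y i < k i" "x i < k i" using yg xg by (auto simp: grid_def)
        then show "y i \<le> k i - 1" "x i \<le> k i - 1" by arith+
      qed
      have ec: "\<And>i. (\<Sum>j\<in>{1..k i - 1}. e i j * c i j) = R i (A i (y i)) - R i (A i (x i))"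
      proof -
        fix i
        have "(\<Sum>j\<in>{1..k i - 1}. e i j * c i j) =
           (\<Sum>j\<in>{1..k i - 1}. if j \<le> y i then R i (A i j) - R i (A i (j - 1)) else 0) -
           (\<Sum>j\<in>{1..k i - 1}. if j \<le> x i then R i (A i j) - R i (A i (j - 1)) else 0)"
          unfolding sum_subtractf[symmetric] by (rule sum.cong) (auto simp: eb c_def)
        also have "\<dots> = (R i (A i (y i)) - R i (A i 0)) - (R i (A i (x i)) - R i (A i 0))"
          using tele[OF yk(1)[of i], where g="\<lambda>j. R i (A i j)"] tele[OF yk(2)[of i], where g="\<lambda>j. R i (A i j)"] by simp
        finally show "(\<Sum>j\<in>{1..k i - 1}. e i j * c i j) = R i (A i (y i)) - R i (A i (x i))" by simp
      qed
      have key: "0 \<le> a + \<epsilon> * (K / 2)" if \<epsilon>: "0 < \<epsilon>" "\<epsilon> \<le> e0 / 2" for \<epsilon>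
      proof -
        define \<rho>' where "\<rho>' = (\<lambda>i j. 1 * \<rho>s i j + \<epsilon> * e i j)"
        have dec': "\<rho>' \<in> dec_set k"
          unfolding dec_set_def mem_Collect_eq
        proof (intro allI impI)
          fix i j assume jj: "1 \<le> j \<and> j + 1 \<le> k i - 1"
          have r: "\<rho>s i (j + 1) \<le> \<rho>s i j" using \<rho>s_mem jj unfolding dec_set_def by blast
          have t1: "lam \<le> \<rho>s i j \<longleftrightarrow> j \<le> x i" using thr jj by simp
          have t2: "lam \<le> \<rho>s i (j + 1) \<longleftrightarrow> j + 1 \<le> x i" using thr jj by simp
          have g2: "\<rho>s i (j + 1) < lam \<Longrightarrow> \<rho>s i (j + 1) + 2 * e0 \<le> lam" using gap jj by simp
          show "\<rho>' i (j + 1) \<le> \<rho>' i j"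
            unfolding \<rho>'_def eb
            using r t1 t2 g2 \<epsilon> e0
            by (cases "j \<le> x i"; cases "j + 1 \<le> x i"; cases "j \<le> y i"; cases "j + 1 \<le> y i"; simp; linarith)
        qed
        have thr': "\<forall>i j. 1 \<le> j \<and> j \<le> k i - 1 \<longrightarrow> (lam - \<epsilon> \<le> \<rho>' i j \<longleftrightarrow> j \<le> x i)"
        proof (intro allI impI)
          fix i j assume jj: "1 \<le> j \<and> j \<le> k i - 1"
          have t1: "lam \<le> \<rho>s i j \<longleftrightarrow> j \<le> x i" using thr jj by simp
          have g1: "\<rho>s i j < lam \<Longrightarrow> \<rho>s i j + 2 * e0 \<le> lam" using gap jj by simp
          show "lam - \<epsilon> \<le> \<rho>' i j \<longleftrightarrow> j \<le> x i"
            unfolding \<rho>'_def eb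
            using t1 g1 \<epsilon> e0
            by (cases "j \<le> x i"; cases "j \<le> y i"; simp; linarith)
        qed
        obtain w where h: "hdown Hd k \<rho>' = Hd (\<lambda>_. 0) + Gr Hd \<rho>' (\<lambda>_. 0) w"
          and so: "sorted_wrt (\<ge>) (vals \<rho>' (\<lambda>_. 0) w)"
          and cw: "\<forall>q. (\<lambda>_. 0) q + count (mset w) q = k q - 1"
          using hdown_rep[OF dec'] by blast
        have lin1: "Gr Hd \<rho>' (\<lambda>_. 0) w = 1 * Gr Hd \<rho>s (\<lambda>_. 0) w + \<epsilon> * Gr Hd e (\<lambda>_. 0) w"
          unfolding \<rho>'_def by (rule Gr_lin)
        have lin2: "Gr Hd e (\<lambda>_. 0) w = 1 * Gr Hd (ind y) (\<lambda>_. 0) w + (-1) * Gr Hd (ind x) (\<lambda>_. 0) w"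
          unfolding e_def by (rule Gr_lin)
        have lo: "Hd (\<lambda>_. 0) + Gr Hd \<rho>s (\<lambda>_. 0) w \<le> hdown Hd k \<rho>s"
          by (rule hdown_lower[OF SM \<rho>s_mem kp cw])
        have up0: "Gr Hd (ind y) (\<lambda>_. 0) w \<le> Hd (\<lambda>q. max ((\<lambda>_. 0) q) (y q)) - Hd (\<lambda>_. 0)"
          by (rule Gr_ind_upper[OF SM yg kp cw])
        have "(\<lambda>q. max ((\<lambda>_. 0::nat) q) (y q)) = y" by (simp add: fun_eq_iff)
        then have up: "Gr Hd (ind y) (\<lambda>_. 0) w \<le> Hd y - Hd (\<lambda>_. 0)" using up0 by simp
        have ex0: "Gr Hd (ind x) (\<lambda>_. 0) w = Hd (\<lambda>q. max ((\<lambda>_. 0) q) (x q)) - Hd (\<lambda>_. 0)"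
          by (rule Gr_ind_exact[OF xg thr' so cw])
        have "(\<lambda>q. max ((\<lambda>_. 0::nat) q) (x q)) = x" by (simp add: fun_eq_iff)
        then have ex: "Gr Hd (ind x) (\<lambda>_. 0) w = Hd x - Hd (\<lambda>_. 0)" using ex0 by simp
        have up2: "\<epsilon> * Gr Hd (ind y) (\<lambda>_. 0) w \<le> \<epsilon> * Hd y - \<epsilon> * Hd (\<lambda>_. 0)"
          using mult_left_mono[OF up, of \<epsilon>] \<epsilon> by (simp add: right_diff_distrib)
        have ex2: "\<epsilon> * Gr Hd (ind x) (\<lambda>_. 0) w = \<epsilon> * Hd x - \<epsilon> * Hd (\<lambda>_. 0)"
          by (simp add: ex right_diff_distrib)
        have G: "Gr Hd \<rho>' (\<lambda>_. 0) w = Gr Hd \<rho>s (\<lambda>_. 0) w + \<epsilon> * Gr Hd (ind y) (\<lambda>_. 0) w - \<epsilon> * Gr Hd (ind x) (\<lambda>_. 0) w"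
          using lin1 lin2 by (simp add: algebra_simps)
        have hd: "hdown Hd k \<rho>' - hdown Hd k \<rho>s \<le> \<epsilon> * Hd y - \<epsilon> * Hd x"
          using h G lo up2 ex2 by linarith
        have qterm: "(1/2) * (\<rho>' i j)^2 * c i j - (1/2) * (\<rho>s i j)^2 * c i j
            \<le> \<epsilon> * lam * (e i j * c i j) + \<epsilon>^2 / 2 * ((e i j)^2 * c i j)"
          if j: "j \<in> {1..k i - 1}" for i j
        proof -
          have c0: "0 \<le> c i j" using cnn j by (simp add: c_def)
          have t1: "lam \<le> \<rho>s i j \<longleftrightarrow> j \<le> x i" using thr j by simp
          have er: "e i j * (\<rho>s i j - lam) \<le> 0"
            unfolding eb using t1 by (cases "j \<le> x i"; cases "j \<le> y i"; simp)
          have "(1/2) * (\<rho>' i j)^2 * c i j - (1/2) * (\<rho>s i j)^2 * c i j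
              - (\<epsilon> * lam * (e i j * c i j) + \<epsilon>^2 / 2 * ((e i j)^2 * c i j))
              = (\<epsilon> * c i j) * (e i j * (\<rho>s i j - lam))"
            by (simp add: \<rho>'_def power2_eq_square algebra_simps)
          also have "\<dots> \<le> 0"
          proof -
            have "0 \<le> \<epsilon> * c i j" using c0 \<epsilon> by simp
            then show ?thesis using er by (rule mult_nonneg_nonpos)
          qed
          finally show ?thesis by simp
        qed
        have qd: "Q \<rho>' - Q \<rho>s \<le> \<epsilon> * lam * (Rdsum y - Rdsum x) + \<epsilon>^2 / 2 * K"
        proof -
          have "Q \<rho>' - Q \<rho>s = (\<Sum>i\<in>UNIV. \<Sum>j\<in>{1..k i - 1}.
              (1/2) * (\<rho>' i j)^2 * c i j - (1/2) * (\<rho>s i j)^2 * c i j)"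
            unfolding Q_def c_def by (simp add: sum_subtractf)
          also have "\<dots> \<le> (\<Sum>i\<in>UNIV. \<Sum>j\<in>{1..k i - 1}.
              \<epsilon> * lam * (e i j * c i j) + \<epsilon>^2 / 2 * ((e i j)^2 * c i j))"
            by (intro sum_mono qterm)
          also have "\<dots> = \<epsilon> * lam * (\<Sum>i\<in>UNIV. \<Sum>j\<in>{1..k i - 1}. e i j * c i j) + \<epsilon>^2 / 2 * K"
            unfolding K_def by (simp add: sum.distrib sum_distrib_left)
          also have "(\<Sum>i\<in>UNIV. \<Sum>j\<in>{1..k i - 1}. e i j * c i j) = Rdsum y - Rdsum x"
            unfolding ec Rdsum_def by (simp add: sum_subtractf)
          finally show ?thesis .
        qed
        have "F \<rho>s \<le> F \<rho>'" using \<rho>s_min dec' by blast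
        then have "0 \<le> (hdown Hd k \<rho>' - hdown Hd k \<rho>s) + (Q \<rho>' - Q \<rho>s)" unfolding FQ by simp
        also have "\<dots> \<le> (\<epsilon> * Hd y - \<epsilon> * Hd x) + (\<epsilon> * lam * (Rdsum y - Rdsum x) + \<epsilon>^2 / 2 * K)"
          using hd qd by (rule add_mono)
        also have "\<dots> = \<epsilon> * (a + \<epsilon> * (K / 2))"
          by (simp add: a_def power2_eq_square algebra_simps)
        finally have "0 \<le> \<epsilon> * (a + \<epsilon> * (K / 2))" .
        then show ?thesis using \<epsilon>(1) by (simp add: zero_le_mult_iff)
      qed
      have "0 < e0 / 2" using e0 by simp
      then have "0 \<le> a" using lim_nonneg[of "e0 / 2" a "K / 2"] key by blast
      moreover have "lam * (Rdsum y - Rdsum x) = lam * Rdsum y - lam * Rdsum x" by (simp add: right_diff_distrib)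
      ultimately show "Hd x + lam * Rdsum x \<le> Hd y + lam * Rdsum y" unfolding a_def by linarith
    qed
    have "x \<in> grid k \<and> (\<forall>y\<in>grid k. Hd x + lam * Rdsum x \<le> Hd y + lam * Rdsum y)" using xg main by blast
    then show ?thesis unfolding Let_def x_def .
  qed
  show ?thesis using P1 P2 P3 by blast
qed

end
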